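(* Let $t_0<\beta\le+\infty$, $J=[t_0,\beta[$, let $D\subset\mathbb{R}^n$ be an open set, let $m\ge1$, and let $f\colon J\times D^m\to\mathbb{R}^n$ be continuous. Suppose there is a continuous function $k\colon J\to\mathbb{R}$ such that \[ \|F(t,z)-F(t,z')\|\le k(t)\,\|z-z'\|\qquad(t\in J,\ z,z'\in D^m), \] where $F(t,(z_1,\dots,z_m))=f(t,z_1,\dots,z_m)$. Let $g_1,\dots,g_m\colon J\to\mathbb{R}$ be continuous functions such that, for some real $\gamma\le t_0$, $\gamma\le g_j(t)\le t$ for all $t\in J$, $j=1,\dots,m$. Let $\theta,\widetilde\theta\colon[\gamma,t_0]\to D$ be continuous initial functions. Suppose $x,\widetilde x\colon[\gamma,\beta[\to D$ are solutions of the problems \[ x'(t)=f\big(t,x(g_1(t)),\dots,x(g_m(t))\big)\ (t\in J),\quad x(t)=\theta(t)\ (t\in[\gamma,t_0]), \] \[ \widetilde x'(t)=f\big(t,\widetilde x(g_1(t)),\dots,\widetilde x(g_m(t))\big)\ (t\in J),\quad \widetilde x(t)=\widetilde\theta(t)\ (t\in[\gamma,t_0]), \] respectively. Then for all $t\in[t_0,\beta[$, \[ \|x(t)-\widetilde x(t)\|\le\|\theta-\widetilde\theta\|\exp\Big(\int_{t_0}^t k(s)\,ds\Big), \] where $\|\theta-\widetilde\theta\|=\sup_{\gamma\le s\le t_0}\|\theta(s)-\widetilde\theta(s)\|$.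
   Context: A solution on $[\gamma,\beta[$ is a continuous function $[\gamma,\beta[\to D$, differentiable on $[t_0,\beta[$ (one-sided at $t_0$), satisfying the differential equation for all $t\in[t_0,\beta[$ and equal to the given initial function on $[\gamma,t_0]$. The norm $\|\cdot\|$ on $\mathbb{R}^n$ is a fixed norm, and on $D^m\subset(\mathbb{R}^n)^m$ the norm is $\|(z_1,\dots,z_m)\|=\max_{1\le j\le m}\|z_j\|$. *)

theory Defs
  imports "HOL-Analysis.Analysis"
begin

definition hoiv :: "real \<Rightarrow> ereal \<Rightarrow> real set" where
  "hoiv a b = {t. a \<le> t \<and> ereal t < b}"

text \<open>Max norm on D^m, with D^m represented as functions from a finite nonempty index type.\<close>
definition maxnorm :: "('m::finite \<Rightarrow> 'a::real_normed_vector) \<Rightarrow> real" where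
  "maxnorm z = Max (range (\<lambda>j. norm (z j)))"

definition is_delay_solution ::
  "(real \<Rightarrow> ('m::finite \<Rightarrow> 'a::real_normed_vector) \<Rightarrow> 'a) \<Rightarrow> ('m \<Rightarrow> real \<Rightarrow> real) \<Rightarrow> 'a set
   \<Rightarrow> real \<Rightarrow> real \<Rightarrow> ereal \<Rightarrow> (real \<Rightarrow> 'a) \<Rightarrow> (real \<Rightarrow> 'a) \<Rightarrow> bool" where
  "is_delay_solution f g D \<gamma> t0 \<beta> \<theta> x \<longleftrightarrow>
     x ` hoiv \<gamma> \<beta> \<subseteq> D \<and>
     continuous_on (hoiv \<gamma> \<beta>) x \<and>
     (\<forall>t\<in>hoiv t0 \<beta>. (x has_vector_derivative f t (\<lambda>j. x (g j t))) (at t within hoiv t0 \<beta>)) \<and>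
     (\<forall>t\<in>{\<gamma>..t0}. x t = \<theta> t)"

end

theory Submission
  imports Defs
begin

theorem mainTheorem2:
  fixes t0 :: real and \<beta> :: ereal and D :: "'a::real_normed_vector set"
    and f :: "real \<Rightarrow> ('m::finite \<Rightarrow> 'a) \<Rightarrow> 'a"
    and k :: "real \<Rightarrow> real" and g :: "'m \<Rightarrow> real \<Rightarrow> real" and \<gamma> :: real
    and \<theta> \<theta>' x x' :: "real \<Rightarrow> 'a"
  assumes t0_lt: "ereal t0 < \<beta>"
    and D_open: "open D"
    and f_cont: "continuous_on (hoiv t0 \<beta> \<times> {z. \<forall>j. z j \<in> D}) (\<lambda>(t, z). f t z)"
    and k_cont: "continuous_on (hoiv t0 \<beta>) k"
    and lip: "\<And>t z z'. t \<in> hoiv t0 \<beta> \<Longrightarrow> (\<forall>j. z j \<in> D) \<Longrightarrow> (\<forall>j. z' j \<in> D) \<Longrightarrow>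
               norm (f t z - f t z') \<le> k t * maxnorm (\<lambda>j. z j - z' j)"
    and g_cont: "\<And>j. continuous_on (hoiv t0 \<beta>) (g j)"
    and \<gamma>_le: "\<gamma> \<le> t0"
    and g_bounds: "\<And>j t. t \<in> hoiv t0 \<beta> \<Longrightarrow> \<gamma> \<le> g j t \<and> g j t \<le> t"
    and \<theta>_cont: "continuous_on {\<gamma>..t0} \<theta>" and \<theta>_D: "\<theta> ` {\<gamma>..t0} \<subseteq> D"
    and \<theta>'_cont: "continuous_on {\<gamma>..t0} \<theta>'" and \<theta>'_D: "\<theta>' ` {\<gamma>..t0} \<subseteq> D"
    and x_sol: "is_delay_solution f g D \<gamma> t0 \<beta> \<theta> x"
    and x'_sol: "is_delay_solution f g D \<gamma> t0 \<beta> \<theta>' x'"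
  shows "\<forall>t\<in>hoiv t0 \<beta>. norm (x t - x' t) \<le>
           (SUP s\<in>{\<gamma>..t0}. norm (\<theta> s - \<theta>' s)) * exp (integral {t0..t} k)"
proof
  fix T assume T: "T \<in> hoiv t0 \<beta>"
  hence tT: "t0 \<le> T" and Tb: "ereal T < \<beta>" by (auto simp: hoiv_def)
  have sub: "{t0..T} \<subseteq> hoiv t0 \<beta>" using Tb \<gamma>_le by (auto simp: hoiv_def intro!: order.strict_trans1[OF _ Tb])
  have sub2: "{\<gamma>..T} \<subseteq> hoiv \<gamma> \<beta>" using Tb \<gamma>_le by (auto simp: hoiv_def intro!: order.strict_trans1[OF _ Tb])
  define e where "e s = x s - x' s" for s
  define M where "M = (SUP s\<in>{\<gamma>..t0}. norm (\<theta> s - \<theta>' s))"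
  have xs: "x ` hoiv \<gamma> \<beta> \<subseteq> D" "continuous_on (hoiv \<gamma> \<beta>) x"
    "\<And>t. t\<in>hoiv t0 \<beta> \<Longrightarrow> (x has_vector_derivative f t (\<lambda>j. x (g j t))) (at t within hoiv t0 \<beta>)"
    "\<And>t. t\<in>{\<gamma>..t0} \<Longrightarrow> x t = \<theta> t"
    using x_sol unfolding is_delay_solution_def by auto
  have xs': "x' ` hoiv \<gamma> \<beta> \<subseteq> D" "continuous_on (hoiv \<gamma> \<beta>) x'"
    "\<And>t. t\<in>hoiv t0 \<beta> \<Longrightarrow> (x' has_vector_derivative f t (\<lambda>j. x' (g j t))) (at t within hoiv t0 \<beta>)"
    "\<And>t. t\<in>{\<gamma>..t0} \<Longrightarrow> x' t = \<theta>' t"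
    using x'_sol unfolding is_delay_solution_def by auto
  have cth: "continuous_on {\<gamma>..t0} (\<lambda>s. norm (\<theta> s - \<theta>' s))"
    using \<theta>_cont \<theta>'_cont by (intro continuous_intros)
  have bdd: "bdd_above ((\<lambda>s. norm (\<theta> s - \<theta>' s)) ` {\<gamma>..t0})"
    by (intro bounded_imp_bdd_above compact_imp_bounded compact_continuous_image cth) auto
  have Me: "norm (e s) \<le> M" if "s \<in> {\<gamma>..t0}" for s
    using that xs(4) xs'(4) unfolding e_def M_def by (auto intro!: cSUP_upper bdd)
  have M0: "0 \<le> M" using Me[of t0] \<gamma>_le by (meson atLeastAtMost_iff norm_ge_zero order_trans order_refl)
  have inD: "x s \<in> D" "x' s \<in> D" if "s \<in> {\<gamma>..T}" for s
    using that sub2 xs(1) xs'(1) by (auto simp: image_subset_iff subset_iff)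
  show "norm (x T - x' T) \<le> M * exp (integral {t0..T} k)"
  proof (cases "\<exists>p\<in>D. \<exists>q\<in>D. p \<noteq> q")
    case False
    have "x T = x' T" using False inD[of T] tT \<gamma>_le by auto
    thus ?thesis using M0 by simp
  next
    case True
    then obtain p q where pq: "p \<in> D" "q \<in> D" "p \<noteq> q" by auto
    have k0: "0 \<le> k s" if "s \<in> hoiv t0 \<beta>" for s
    proof -
      have "0 \<le> k s * maxnorm (\<lambda>j::'m. p - q)"
        using lip[OF that, of "\<lambda>_. p" "\<lambda>_. q"] pq norm_ge_zero order_trans by blast
      moreover have "maxnorm (\<lambda>j::'m. p - q) = norm (p - q)" unfolding maxnorm_def by simp
      moreover have "norm (p - q) > 0" using pq by simp
      ultimately show ?thesis by (simp add: zero_le_mult_iff)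
    qed
    define K where "K s = integral {t0..s} k" for s
    have kc: "continuous_on {t0..T} k" using k_cont sub continuous_on_subset by blast
    have Kd: "(K has_real_derivative k s) (at s within {t0..T})" if "s \<in> {t0..T}" for s
      unfolding K_def by (rule integral_has_real_derivative[OF kc that])
    have Kc: "continuous_on {t0..T} K"
      using Kd by (meson DERIV_continuous continuous_on_eq_continuous_within)
    have Kmono: "K a \<le> K b" if "t0 \<le> a" "a \<le> b" "b \<le> T" for a b
    proof -
      have "k integrable_on {t0..a}" "k integrable_on {t0..b}"
        using kc that by (auto intro!: integrable_continuous_interval elim: continuous_on_subset)
      moreover have "\<forall>s\<in>{t0..b}. 0 \<le> k s" using k0 sub that by (force simp: subset_iff)
      ultimately show ?thesis unfolding K_def using that by (intro integral_subset_le) auto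
    qed
    have K0: "K t0 = 0" unfolding K_def by simp
    have Kpos: "0 \<le> K s" if "s \<in> {t0..T}" for s using Kmono[of t0 s] that K0 by auto
    have main: "norm (e T) \<le> (M + \<epsilon>) * exp (K T)" if \<epsilon>: "\<epsilon> > 0" for \<epsilon>
    proof -
      define w where "w s = (M + \<epsilon>) * exp (K s)" for s
      have wc: "continuous_on {t0..T} w" unfolding w_def using Kc by (intro continuous_intros)
      have ec: "continuous_on {\<gamma>..T} e" unfolding e_def using xs(2) xs'(2) sub2
        by (intro continuous_intros) (auto elim: continuous_on_subset)
      have ec2: "continuous_on {t0..T} e" using ec \<gamma>_le by (auto elim: continuous_on_subset)
      have wmono: "w a \<le> w b" if "t0 \<le> a" "a \<le> b" "b \<le> T" for a b
        unfolding w_def using Kmono[OF that] M0 \<epsilon> by (intro mult_left_mono) auto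
      have Mw: "M + \<epsilon> \<le> w s" if "s \<in> {t0..T}" for s
        unfolding w_def using Kpos[OF that] M0 \<epsilon> by simp
      have "norm (e t) < w t" if t: "t \<in> {t0..T}" for t
      proof (rule ccontr)
        assume "\<not> norm (e t) < w t"
        define S where "S = {t0..T} \<inter> (\<lambda>s. w s - norm (e s)) -` {..0}"
        have tS: "t \<in> S" using t \<open>\<not> norm (e t) < w t\<close> unfolding S_def by auto
        have clS: "closed S" unfolding S_def
          by (intro continuous_closed_preimage continuous_intros wc ec2)
        have bS: "bdd_below S" unfolding S_def by (rule bdd_belowI[of _ t0]) auto
        define t1 where "t1 = Inf S"
        have t1S: "t1 \<in> S" unfolding t1_def using clS bS tS closed_contains_Inf by blast
        hence t1: "t0 \<le> t1" "t1 \<le> T" "w t1 \<le> norm (e t1)" unfolding S_def by auto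
        have below: "norm (e s) < w s" if "t0 \<le> s" "s < t1" for s
        proof (rule ccontr)
          assume "\<not> norm (e s) < w s"
          hence "s \<in> S" using that t1 unfolding S_def by auto
          hence "t1 \<le> s" unfolding t1_def using bS by (rule cInf_lower)
          thus False using that by simp
        qed
        have e0: "norm (e t0) \<le> M" using Me[of t0] \<gamma>_le by simp
        have w0: "w t0 = M + \<epsilon>" unfolding w_def K0 by simp
        have lt: "t0 < t1"
        proof (rule ccontr)
          assume "\<not> t0 < t1" hence "t1 = t0" using t1 by simp
          thus False using t1(3) e0 w0 \<epsilon> by simp
        qed
        have bnd: "norm (e t1 - e t0) \<le> w t1 - w t0"
        proof (rule differentiable_bound_general[OF lt])
          show "continuous_on {t0..t1} e" using ec2 t1 by (auto elim: continuous_on_subset)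
          show "continuous_on {t0..t1} w" using wc t1 by (auto elim: continuous_on_subset)
        next
          fix s assume s: "t0 < s" "s < t1"
          have sT: "s \<in> {t0..T}" using s t1 by auto
          have atw: "at s within {t0<..<t1} = at s" using s by (intro at_within_open) auto
          have ssub: "{t0<..<t1} \<subseteq> hoiv t0 \<beta>" using sub t1 by auto
          have dx: "(x has_vector_derivative f s (\<lambda>j. x (g j s))) (at s)"
            using has_vector_derivative_within_subset[OF xs(3)[of s] ssub] sT sub atw by auto
          have dx': "(x' has_vector_derivative f s (\<lambda>j. x' (g j s))) (at s)"
            using has_vector_derivative_within_subset[OF xs'(3)[of s] ssub] sT sub atw by auto
          show "(e has_vector_derivative (f s (\<lambda>j. x (g j s)) - f s (\<lambda>j. x' (g j s)))) (at s)"
            unfolding e_def[abs_def] using dx dx' by (rule has_vector_derivative_diff)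
          have dK: "(K has_real_derivative k s) (at s)"
            using has_field_derivative_subset[OF Kd[OF sT], of "{t0<..<t1}"] t1 atw by (auto simp: subset_iff)
          have "(w has_real_derivative (M + \<epsilon>) * (exp (K s) * k s)) (at s)"
            unfolding w_def[abs_def] using DERIV_cmult[OF DERIV_chain2[OF DERIV_exp dK], of "M + \<epsilon>"] by simp
          thus "(w has_vector_derivative k s * w s) (at s)"
            by (simp add: has_real_derivative_iff_has_vector_derivative w_def mult_ac)
          have gb: "\<gamma> \<le> g j s \<and> g j s \<le> s" for j using g_bounds[of s j] sT sub by auto
          have gD: "\<forall>j. x (g j s) \<in> D" "\<forall>j. x' (g j s) \<in> D" using gb inD sT by (meson atLeastAtMost_iff order_trans)+
          have ge: "norm (e (g j s)) \<le> w s" for j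
          proof (cases "g j s \<le> t0")
            case True
            hence "norm (e (g j s)) \<le> M" using Me gb by auto
            thus ?thesis using Mw[OF sT] \<epsilon> by simp
          next
            case False
            hence "norm (e (g j s)) < w (g j s)" using below[of "g j s"] gb[of j] s by simp
            moreover have "w (g j s) \<le> w s" using wmono[of "g j s" s] gb False sT by auto
            ultimately show ?thesis by simp
          qed
          have "maxnorm (\<lambda>j. x (g j s) - x' (g j s)) \<le> w s"
            unfolding maxnorm_def using ge unfolding e_def by (simp add: Max_le_iff)
          hence "k s * maxnorm (\<lambda>j. x (g j s) - x' (g j s)) \<le> k s * w s"
            using k0 sT sub by (intro mult_left_mono) auto
          thus "norm (f s (\<lambda>j. x (g j s)) - f s (\<lambda>j. x' (g j s))) \<le> k s * w s"
            using lip[of s "\<lambda>j. x (g j s)" "\<lambda>j. x' (g j s)"] sT sub gD by fastforce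
        qed
        have "norm (e t1) \<le> norm (e t0) + norm (e t1 - e t0)" using norm_triangle_sub[of "e t1" "e t0"] by simp
        also have "\<dots> \<le> M + (w t1 - (M + \<epsilon>))" using bnd e0 w0 by simp
        finally show False using t1(3) \<epsilon> by simp
      qed
      thus ?thesis using tT unfolding w_def by (intro less_imp_le) auto
    qed
    have eK: "exp (K T) > 0" by simp
    have "norm (e T) \<le> M * exp (K T)"
    proof (rule field_le_epsilon)
      fix d :: real assume d: "0 < d"
      have "norm (e T) \<le> (M + d / exp (K T)) * exp (K T)" using main[of "d / exp (K T)"] d by simp
      also have "\<dots> = M * exp (K T) + d" by (simp add: algebra_simps)
      finally show "norm (e T) \<le> M * exp (K T) + d" .
    qed
    thus ?thesis unfolding e_def K_def M_def .
  qed
qed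

end
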